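(* Let $\{(\Gamma_t,\theta_t)\}_{t\in[0,\underline t)}$ solve the framed curvature flow and let $A_p(\Gamma_t):=\frac12\int_{\Gamma_t}\gamma\times\partial_s\gamma\,ds\in\mathbb{R}^3$. Then $$\frac{d}{dt}A_p(\Gamma_t)=-\int_{\Gamma_t}\kappa\,\beta_\theta\,ds .$$
   Context: $S^1=\mathbb{R}/2\pi\mathbb{Z}$; closed curves $\Gamma_t$ parametrized by $\gamma(t,\cdot):S^1\to\mathbb{R}^3$, $g=\|\partial_u\gamma\|$, $ds=g\,du$, $\partial_s=g^{-1}\partial_u$; Frenet frame $T,N,B$, curvature $\kappa$; angle function $\theta$, $\theta$-normal $\nu_\theta=\cos\theta N+\sin\theta B$, $\theta$-binormal $\beta_\theta=-\sin\theta N+\cos\theta B=T\times\nu_\theta$. Framed curvature flow: $\partial_t\gamma=\kappa\nu_\theta$, $\partial_t\theta=\upsilon_\theta$. *)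

theory Defs
  imports "HOL-Analysis.Analysis"
begin

text \<open>Smoothness (C-infinity) of a function of two real variables (t,u) on a set S:
  f is differentiable (relative to S) with partial derivatives f1 (in t) and f2 (in u),
  and these partial derivatives are again smooth on S.\<close>
coinductive smooth_on :: "(real \<times> real) set \<Rightarrow> (real \<times> real \<Rightarrow> 'a::real_normed_vector) \<Rightarrow> bool" where
  smooth_onI: "(\<forall>x\<in>S. (f has_derivative (\<lambda>h. fst h *\<^sub>R f1 x + snd h *\<^sub>R f2 x)) (at x within S))
    \<Longrightarrow> smooth_on S f1 \<Longrightarrow> smooth_on S f2 \<Longrightarrow> smooth_on S f"

definition d_u :: "(real \<times> real \<Rightarrow> real^3) \<Rightarrow> real \<Rightarrow> real \<Rightarrow> real^3" where
  "d_u F t u = vector_derivative (\<lambda>v. F (t, v)) (at u)"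

definition speed :: "(real \<times> real \<Rightarrow> real^3) \<Rightarrow> real \<Rightarrow> real \<Rightarrow> real" where
  "speed \<gamma> t u = norm (d_u \<gamma> t u)"

definition d_s :: "(real \<times> real \<Rightarrow> real^3) \<Rightarrow> (real \<times> real \<Rightarrow> real^3) \<Rightarrow> real \<Rightarrow> real \<Rightarrow> real^3" where
  "d_s \<gamma> F t u = (1 / speed \<gamma> t u) *\<^sub>R d_u F t u"

definition tangent :: "(real \<times> real \<Rightarrow> real^3) \<Rightarrow> real \<Rightarrow> real \<Rightarrow> real^3" where
  "tangent \<gamma> t u = d_s \<gamma> \<gamma> t u"

definition curvature :: "(real \<times> real \<Rightarrow> real^3) \<Rightarrow> real \<Rightarrow> real \<Rightarrow> real" where
  "curvature \<gamma> t u = norm (d_s \<gamma> (\<lambda>(t',u'). tangent \<gamma> t' u') t u)"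

definition normal :: "(real \<times> real \<Rightarrow> real^3) \<Rightarrow> real \<Rightarrow> real \<Rightarrow> real^3" where
  "normal \<gamma> t u = (1 / curvature \<gamma> t u) *\<^sub>R d_s \<gamma> (\<lambda>(t',u'). tangent \<gamma> t' u') t u"

definition binormal :: "(real \<times> real \<Rightarrow> real^3) \<Rightarrow> real \<Rightarrow> real \<Rightarrow> real^3" where
  "binormal \<gamma> t u = cross3 (tangent \<gamma> t u) (normal \<gamma> t u)"

definition theta_normal :: "(real \<times> real \<Rightarrow> real^3) \<Rightarrow> (real \<times> real \<Rightarrow> real) \<Rightarrow> real \<Rightarrow> real \<Rightarrow> real^3" where
  "theta_normal \<gamma> \<theta> t u = cos (\<theta> (t, u)) *\<^sub>R normal \<gamma> t u + sin (\<theta> (t, u)) *\<^sub>R binormal \<gamma> t u"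

definition theta_binormal :: "(real \<times> real \<Rightarrow> real^3) \<Rightarrow> (real \<times> real \<Rightarrow> real) \<Rightarrow> real \<Rightarrow> real \<Rightarrow> real^3" where
  "theta_binormal \<gamma> \<theta> t u = - sin (\<theta> (t, u)) *\<^sub>R normal \<gamma> t u + cos (\<theta> (t, u)) *\<^sub>R binormal \<gamma> t u"

text \<open>Integral over the closed curve Gamma_t with respect to arc length: S^1 = [0,2pi], ds = g du.\<close>
definition curve_integral_ds :: "(real \<times> real \<Rightarrow> real^3) \<Rightarrow> real \<Rightarrow> (real \<Rightarrow> real^3) \<Rightarrow> real^3" where
  "curve_integral_ds \<gamma> t F = integral {0..2*pi} (\<lambda>u. speed \<gamma> t u *\<^sub>R F u)"

definition area_vector :: "(real \<times> real \<Rightarrow> real^3) \<Rightarrow> real \<Rightarrow> real^3" where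
  "area_vector \<gamma> t = (1/2) *\<^sub>R curve_integral_ds \<gamma> t (\<lambda>u. cross3 (\<gamma> (t, u)) (d_s \<gamma> \<gamma> t u))"

text \<open>Framed curvature flow on [0,T): smooth, 2pi-periodic in u, regular, Frenet frame defined
  (positive curvature), and d_t gamma = kappa nu_theta.  The equation d_t theta = upsilon_theta
  merely names the time derivative of theta.\<close>
definition framed_curvature_flow :: "real \<Rightarrow> (real \<times> real \<Rightarrow> real^3) \<Rightarrow> (real \<times> real \<Rightarrow> real) \<Rightarrow> bool" where
  "framed_curvature_flow T \<gamma> \<theta> \<longleftrightarrow>
     smooth_on ({0..<T} \<times> UNIV) \<gamma> \<and> smooth_on ({0..<T} \<times> UNIV) \<theta> \<and>
     (\<forall>t\<in>{0..<T}. \<forall>u. \<gamma> (t, u + 2*pi) = \<gamma> (t, u) \<and> \<theta> (t, u + 2*pi) = \<theta> (t, u)) \<and>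
     (\<forall>t\<in>{0..<T}. \<forall>u. speed \<gamma> t u > 0 \<and> curvature \<gamma> t u > 0) \<and>
     (\<forall>t\<in>{0..<T}. \<forall>u. ((\<lambda>t'. \<gamma> (t', u)) has_vector_derivative
         (curvature \<gamma> t u *\<^sub>R theta_normal \<gamma> \<theta> t u)) (at t within {0..<T}))"

end

theory Submission imports Defs begin

lemma smooth_unfold:
  assumes "smooth_on S f"
  shows "\<exists>f1 f2. (\<forall>x\<in>S. (f has_derivative (\<lambda>h. fst h *\<^sub>R f1 x + snd h *\<^sub>R f2 x)) (at x within S))
     \<and> smooth_on S f1 \<and> smooth_on S f2"
  using assms by (cases rule: smooth_on.cases) blast

lemma smooth_cont:
  assumes "smooth_on S f" shows "continuous_on S f"
proof -
  obtain f1 f2 where d: "\<forall>x\<in>S. (f has_derivative (\<lambda>h. fst h *\<^sub>R f1 x + snd h *\<^sub>R f2 x)) (at x within S)"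
    using smooth_unfold[OF assms] by blast
  show ?thesis unfolding continuous_on_eq_continuous_within
    using d has_derivative_continuous by blast
qed

lemma partial_t:
  assumes d: "\<forall>x\<in>U \<times> UNIV. (f has_derivative (\<lambda>h. fst h *\<^sub>R f1 x + snd h *\<^sub>R f2 x)) (at x within U \<times> UNIV)"
    and t: "t \<in> U"
  shows "((\<lambda>s. f (s, u)) has_vector_derivative f1 (t, u)) (at t within U)"
proof -
  have p: "((\<lambda>s. (s, u)) has_derivative (\<lambda>h. (h, 0))) (at t within U)"
    by (auto intro!: derivative_eq_intros)
  have "((\<lambda>s. f (s, u)) has_derivative (\<lambda>y. fst (y, 0::real) *\<^sub>R f1 (t, u) + snd (y, 0::real) *\<^sub>R f2 (t, u))) (at t within U)"
    by (rule has_derivative_in_compose2[OF _ _ t p, where g=f and t="U \<times> UNIV"]) (use d in auto)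
  then show ?thesis by (simp add: has_vector_derivative_def)
qed

lemma partial_u:
  assumes d: "\<forall>x\<in>U \<times> UNIV. (f has_derivative (\<lambda>h. fst h *\<^sub>R f1 x + snd h *\<^sub>R f2 x)) (at x within U \<times> UNIV)"
    and t: "t \<in> U"
  shows "((\<lambda>v. f (t, v)) has_vector_derivative f2 (t, u)) (at u)"
proof -
  have p: "((\<lambda>v. (t, v)) has_derivative (\<lambda>h. (0, h))) (at u within UNIV)"
    by (auto intro!: derivative_eq_intros)
  have "((\<lambda>v. f (t, v)) has_derivative (\<lambda>y. fst (0::real, y) *\<^sub>R f1 (t, u) + snd (0::real, y) *\<^sub>R f2 (t, u))) (at u within UNIV)"
    by (rule has_derivative_in_compose2[OF _ _ _ p, where g=f and t="U \<times> UNIV"]) (use d t in auto)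
  then show ?thesis by (simp add: has_vector_derivative_def)
qed

lemma cont_slice:
  assumes "continuous_on (U \<times> UNIV) f" "t \<in> U"
  shows "continuous_on A (\<lambda>u. f (t, u))"
  by (rule continuous_on_compose2[OF assms(1)]) (use assms(2) in \<open>auto intro!: continuous_intros\<close>)

lemma triple: fixes a b c :: "real^3" shows "cross3 (cross3 a b) c = (a \<bullet> c) *\<^sub>R b - (b \<bullet> c) *\<^sub>R a"
  by (simp add: cross3_simps forall_3)

lemma bbc: "bounded_bilinear (cross3 :: real^3 \<Rightarrow> real^3 \<Rightarrow> real^3)"
  using bilinear_conv_bounded_bilinear bilinear_cross by blast

lemma nb: assumes "t \<in> {0..<T::real}" shows "at t within {0..<T} \<noteq> bot"
proof
  assume b: "at t within {0..<T} = bot"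
  have lt: "t < (t+T)/2" using assms by auto
  have "{t..(t+T)/2} \<subseteq> {0..<T}" using assms by auto
  then have "at t within {t..(t+T)/2} \<le> at t within {0..<T}" by (rule at_le)
  then have "at_right t = (bot :: real filter)" using b at_within_Icc_at_right[OF lt] by (simp add: bot_unique)
  then show False by simp
qed

lemma frame_cross:
  fixes T N :: "real^3"
  assumes "T \<bullet> T = 1" "T \<bullet> N = 0"
  shows "cross3 (cos a *\<^sub>R N + sin a *\<^sub>R cross3 T N) T = - (- sin a *\<^sub>R N + cos a *\<^sub>R cross3 T N)"
proof -
  have "cross3 (cross3 T N) T = N" using assms by (simp add: triple inner_commute)
  moreover have "cross3 N T = - cross3 T N" by (rule cross_skew)
  ultimately show ?thesis by (simp add: cross_add_left cross_mult_left)
qed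

theorem mainTheorem13:
  fixes T :: real and \<gamma> :: "real \<times> real \<Rightarrow> real^3" and \<theta> :: "real \<times> real \<Rightarrow> real"
  assumes "T > 0" and "framed_curvature_flow T \<gamma> \<theta>"
  shows "\<forall>t\<in>{0..<T}. (area_vector \<gamma> has_vector_derivative
           - curve_integral_ds \<gamma> t (\<lambda>u. curvature \<gamma> t u *\<^sub>R theta_binormal \<gamma> \<theta> t u))
         (at t within {0..<T})"
proof (intro ballI)
  fix t0 assume t0U0: "t0 \<in> {0..<T}"
  define U where "U = {0..<T}"
  have t0: "t0 \<in> U" using t0U0 U_def by simp
  have sm: "smooth_on (U \<times> UNIV) \<gamma>" and per: "\<And>t u. t \<in> U \<Longrightarrow> \<gamma> (t, u + 2*pi) = \<gamma> (t, u)"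
    and pos: "\<And>t u. t \<in> U \<Longrightarrow> speed \<gamma> t u > 0"
    and flow: "\<And>t u. t \<in> U \<Longrightarrow> ((\<lambda>t'. \<gamma> (t', u)) has_vector_derivative
         (curvature \<gamma> t u *\<^sub>R theta_normal \<gamma> \<theta> t u)) (at t within U)"
    using assms(2) unfolding framed_curvature_flow_def U_def by auto
  obtain g1 g2 where dg: "\<forall>x\<in>U \<times> UNIV. (\<gamma> has_derivative (\<lambda>h. fst h *\<^sub>R g1 x + snd h *\<^sub>R g2 x)) (at x within U \<times> UNIV)"
    and sm1: "smooth_on (U \<times> UNIV) g1" and sm2: "smooth_on (U \<times> UNIV) g2"
    using smooth_unfold[OF sm] by blast
  obtain g21 g22 where dg2: "\<forall>x\<in>U \<times> UNIV. (g2 has_derivative (\<lambda>h. fst h *\<^sub>R g21 x + snd h *\<^sub>R g22 x)) (at x within U \<times> UNIV)"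
    and sm21: "smooth_on (U \<times> UNIV) g21"
    using smooth_unfold[OF sm2] by blast
  have c0: "continuous_on (U \<times> UNIV) \<gamma>" using sm by (rule smooth_cont)
  have c1: "continuous_on (U \<times> UNIV) g1" using sm1 by (rule smooth_cont)
  have c2: "continuous_on (U \<times> UNIV) g2" using sm2 by (rule smooth_cont)
  have c21: "continuous_on (U \<times> UNIV) g21" using sm21 by (rule smooth_cont)
  have notbot: "\<And>t. t \<in> U \<Longrightarrow> at t within U \<noteq> bot" unfolding U_def by (rule nb)
  have du: "\<And>t u. t \<in> U \<Longrightarrow> ((\<lambda>v. \<gamma> (t, v)) has_vector_derivative g2 (t, u)) (at u)"
    using partial_u[OF dg] by blast
  have du2: "\<And>t u. t \<in> U \<Longrightarrow> ((\<lambda>v. g2 (t, v)) has_vector_derivative g22 (t, u)) (at u)"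
    using partial_u[OF dg2] by blast
  have dt: "\<And>t u. t \<in> U \<Longrightarrow> ((\<lambda>s. \<gamma> (s, u)) has_vector_derivative g1 (t, u)) (at t within U)"
    using partial_t[OF dg] by blast
  have dt2: "\<And>t u. t \<in> U \<Longrightarrow> ((\<lambda>s. g2 (s, u)) has_vector_derivative g21 (t, u)) (at t within U)"
    using partial_t[OF dg2] by blast
  have dU: "\<And>t u. t \<in> U \<Longrightarrow> d_u \<gamma> t u = g2 (t, u)"
    unfolding d_u_def using du vector_derivative_at by blast
  have g1eq: "\<And>t u. t \<in> U \<Longrightarrow> g1 (t, u) = curvature \<gamma> t u *\<^sub>R theta_normal \<gamma> \<theta> t u"
    using vector_derivative_unique_within[OF notbot dt flow] by blast
  have g1per: "g1 (t, u + 2*pi) = g1 (t, u)" if t: "t \<in> U" for t u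
  proof -
    have "((\<lambda>s. \<gamma> (s, u + 2*pi)) has_vector_derivative g1 (t, u)) (at t within U)"
      by (rule has_vector_derivative_transform_within[OF dt[OF t, of u] zero_less_one t]) (simp add: per)
    then show ?thesis using vector_derivative_unique_within[OF notbot[OF t] dt[OF t, of "u + 2*pi"]] by blast
  qed
  define I where "I t = integral {0..2*pi} (\<lambda>u. cross3 (\<gamma> (t, u)) (g2 (t, u)))" for t
  have area: "area_vector \<gamma> t = (1/2) *\<^sub>R I t" if t: "t \<in> U" for t
  proof -
    have "speed \<gamma> t u *\<^sub>R cross3 (\<gamma> (t, u)) (d_s \<gamma> \<gamma> t u) = cross3 (\<gamma> (t, u)) (g2 (t, u))" for u
      using pos[OF t, of u] by (simp add: d_s_def dU[OF t] cross_mult_right)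
    then show ?thesis unfolding area_vector_def curve_integral_ds_def I_def by simp
  qed
  define J where "J = integral {0..2*pi} (\<lambda>u. cross3 (\<gamma> (t0, u)) (g21 (t0, u)))"
  define K where "K = integral {0..2*pi} (\<lambda>u. cross3 (g1 (t0, u)) (g2 (t0, u)))"
  have cvU: "convex U" unfolding U_def by (rule convex_real_interval)
  have leib: "(I has_vector_derivative (K + J)) (at t0 within U)"
  proof -
    have "((\<lambda>t. integral (cbox 0 (2*pi)) (\<lambda>u. cross3 (\<gamma> (t, u)) (g2 (t, u)))) has_vector_derivative
       integral (cbox 0 (2*pi)) (\<lambda>u. cross3 (\<gamma> (t0, u)) (g21 (t0, u)) + cross3 (g1 (t0, u)) (g2 (t0, u)))) (at t0 within U)"
    proof (rule leibniz_rule_vector_derivative[OF _ _ _ t0 cvU])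
      fix x u assume x: "x \<in> U"
      show "((\<lambda>x. cross3 (\<gamma> (x, u)) (g2 (x, u))) has_vector_derivative
          cross3 (\<gamma> (x, u)) (g21 (x, u)) + cross3 (g1 (x, u)) (g2 (x, u))) (at x within U)"
        by (rule bounded_bilinear.has_vector_derivative[OF bbc dt[OF x] dt2[OF x]])
    next
      fix x assume x: "x \<in> U"
      show "(\<lambda>u. cross3 (\<gamma> (x, u)) (g2 (x, u))) integrable_on cbox 0 (2*pi)"
        by (rule integrable_continuous) (intro continuous_on_cross cont_slice[OF c0 x] cont_slice[OF c2 x])
    next
      have "continuous_on (U \<times> cbox 0 (2*pi)) (\<lambda>p. cross3 (\<gamma> p) (g21 p) + cross3 (g1 p) (g2 p))"
        by (intro continuous_intros continuous_on_cross continuous_on_subset[OF c0] continuous_on_subset[OF c1]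
          continuous_on_subset[OF c2] continuous_on_subset[OF c21]) auto
      then show "continuous_on (U \<times> cbox 0 (2*pi)) (\<lambda>(x, u). cross3 (\<gamma> (x, u)) (g21 (x, u)) + cross3 (g1 (x, u)) (g2 (x, u)))"
        by (simp add: case_prod_beta')
    qed
    moreover have "integral {0..2*pi} (\<lambda>u. cross3 (\<gamma> (t0, u)) (g21 (t0, u)) + cross3 (g1 (t0, u)) (g2 (t0, u))) = J + K"
      unfolding J_def K_def
      by (rule integral_add; rule integrable_continuous_interval;
          intro continuous_on_cross cont_slice[OF c0 t0] cont_slice[OF c1 t0] cont_slice[OF c2 t0] cont_slice[OF c21 t0])
    ultimately show ?thesis unfolding I_def[abs_def] by (simp add: add.commute)
  qed
  have ftc: "\<gamma> (s, w) - \<gamma> (s, 0) = integral {0..w} (\<lambda>v. g2 (s, v))" if s: "s \<in> U" and w: "0 \<le> w" for s w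
  proof -
    have "((\<lambda>v. g2 (s, v)) has_integral (\<gamma> (s, w) - \<gamma> (s, 0))) {0..w}"
      by (rule fundamental_theorem_of_calculus[OF w]) (use du[OF s] in \<open>auto intro: has_vector_derivative_at_within\<close>)
    then show ?thesis by (simp add: integral_unique)
  qed
  have g1int: "g1 (t0, w) - g1 (t0, 0) = integral {0..w} (\<lambda>v. g21 (t0, v))" if w: "0 \<le> w" for w
  proof -
    have L: "((\<lambda>s. integral (cbox 0 w) (\<lambda>v. g2 (s, v))) has_vector_derivative integral (cbox 0 w) (\<lambda>v. g21 (t0, v))) (at t0 within U)"
    proof (rule leibniz_rule_vector_derivative[OF _ _ _ t0 cvU])
      fix x v assume x: "x \<in> U"
      show "((\<lambda>x. g2 (x, v)) has_vector_derivative g21 (x, v)) (at x within U)" by (rule dt2[OF x])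
    next
      fix x assume x: "x \<in> U"
      show "(\<lambda>v. g2 (x, v)) integrable_on cbox 0 w"
        by (rule integrable_continuous) (rule cont_slice[OF c2 x])
    next
      have "continuous_on (U \<times> cbox 0 w) g21"
        by (rule continuous_on_subset[OF c21]) auto
      then show "continuous_on (U \<times> cbox 0 w) (\<lambda>(x, v). g21 (x, v))" by simp
    qed
    have "((\<lambda>s. integral (cbox 0 w) (\<lambda>v. g2 (s, v))) has_vector_derivative g1 (t0, w) - g1 (t0, 0)) (at t0 within U)"
      by (rule has_vector_derivative_transform_within[OF has_vector_derivative_diff[OF dt[OF t0] dt[OF t0]] zero_less_one t0])
        (simp add: ftc w)
    then show ?thesis using vector_derivative_unique_within[OF notbot[OF t0] L] by simp
  qed
  have clair: "((\<lambda>v. g1 (t0, v)) has_vector_derivative g21 (t0, u)) (at u)" if u: "u \<in> {0<..<2*pi}" for u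
  proof -
    have cg: "continuous_on {0..2*pi} (\<lambda>v. g21 (t0, v))" by (rule cont_slice[OF c21 t0])
    have "((\<lambda>v. g1 (t0, 0) + integral {0..v} (\<lambda>v. g21 (t0, v))) has_vector_derivative 0 + g21 (t0, u)) (at u within {0..2*pi})"
      by (rule has_vector_derivative_add[OF has_vector_derivative_const integral_has_vector_derivative[OF cg]]) (use u in auto)
    then have "((\<lambda>v. g1 (t0, 0) + integral {0..v} (\<lambda>v. g21 (t0, v))) has_vector_derivative g21 (t0, u)) (at u within {0..2*pi})"
      by simp
    then have "((\<lambda>v. g1 (t0, v)) has_vector_derivative g21 (t0, u)) (at u within {0..2*pi})"
      by (rule has_vector_derivative_transform_within[OF _ zero_less_one]) (use u in \<open>auto simp: g1int[symmetric]\<close>)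
    then have "((\<lambda>v. g1 (t0, v)) has_vector_derivative g21 (t0, u)) (at u within {0<..<2*pi})"
      by (rule has_vector_derivative_within_subset) auto
    then show ?thesis using has_vector_derivative_within_open[OF u open_greaterThanLessThan] by blast
  qed
  have ibp: "J = K"
  proof -
    have pp: "0 \<le> 2*pi" by simp
    have intJ: "((\<lambda>x. cross3 (\<gamma> (t0, x)) (g21 (t0, x))) has_integral J) {0..2*pi}"
      unfolding J_def
      by (rule integrable_integral, rule integrable_continuous_interval)
        (intro continuous_on_cross cont_slice[OF c0 t0] cont_slice[OF c21 t0])
    have bd: "cross3 (\<gamma> (t0, 2*pi)) (g1 (t0, 2*pi)) - cross3 (\<gamma> (t0, 0)) (g1 (t0, 0)) - (- J) = J"
      using per[OF t0, of 0] g1per[OF t0, of 0] by simp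
    have "((\<lambda>x. cross3 (g2 (t0, x)) (g1 (t0, x))) has_integral (- J)) {0..2*pi}"
    proof (rule integration_by_parts_interior[OF bbc pp cont_slice[OF c0 t0] cont_slice[OF c1 t0]])
      show "((\<lambda>x. cross3 (\<gamma> (t0, x)) (g21 (t0, x))) has_integral
          (cross3 (\<gamma> (t0, 2*pi)) (g1 (t0, 2*pi)) - cross3 (\<gamma> (t0, 0)) (g1 (t0, 0)) - (- J))) {0..2*pi}"
        using intJ bd by simp
    next
      fix x :: real assume "x \<in> {0<..<2*pi}"
      then show "((\<lambda>v. g1 (t0, v)) has_vector_derivative g21 (t0, x)) (at x)" by (rule clair)
    next
      fix x :: real assume "x \<in> {0<..<2*pi}"
      show "((\<lambda>v. \<gamma> (t0, v)) has_vector_derivative g2 (t0, x)) (at x)" by (rule du[OF t0])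
    qed
    then have "((\<lambda>x. cross3 (g1 (t0, x)) (g2 (t0, x))) has_integral J) {0..2*pi}"
      using has_integral_neg[of "\<lambda>x. cross3 (g2 (t0, x)) (g1 (t0, x))" "- J" "{0..2*pi}"]
      by (simp flip: cross_skew)
    then show ?thesis unfolding K_def by (simp add: integral_unique)
  qed
  have pw: "cross3 (g1 (t0, u)) (g2 (t0, u)) = - (speed \<gamma> t0 u *\<^sub>R (curvature \<gamma> t0 u *\<^sub>R theta_binormal \<gamma> \<theta> t0 u))" for u
  proof -
    have sp: "speed \<gamma> t0 v = norm (g2 (t0, v))" for v by (simp add: speed_def dU[OF t0])
    have tan: "tangent \<gamma> t0 v = inverse (norm (g2 (t0, v))) *\<^sub>R g2 (t0, v)" for v
      by (simp add: tangent_def d_s_def sp dU[OF t0] divide_inverse)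
    have nz: "g2 (t0, v) \<noteq> 0" for v using pos[OF t0, of v] sp by auto
    have TT: "tangent \<gamma> t0 v \<bullet> tangent \<gamma> t0 v = 1" for v
      using nz[of v] by (simp add: tan inner_commute power2_eq_square[symmetric] flip: power2_norm_eq_inner)
    define TD where "TD = vector_derivative (\<lambda>v. tangent \<gamma> t0 v) (at u)"
    have diff: "(\<lambda>v. tangent \<gamma> t0 v) differentiable (at u)"
    proof -
      have g2d: "(\<lambda>v. g2 (t0, v)) differentiable (at u)" using du2[OF t0] by (rule differentiableI_vector)
      have "(\<lambda>v. inverse (norm (g2 (t0, v))) *\<^sub>R g2 (t0, v)) differentiable (at u)"
        by (intro differentiable_scaleR differentiable_inverse g2d differentiable_compose[where f=norm and g="\<lambda>v. g2 (t0, v)" and x=u, OF differentiable_norm_at[OF nz]])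
          (use nz in auto)
      then show ?thesis by (simp add: tan)
    qed
    then have hTD: "((\<lambda>v. tangent \<gamma> t0 v) has_vector_derivative TD) (at u)"
      unfolding TD_def by (rule vector_derivative_works[THEN iffD1])
    have "((\<lambda>v. tangent \<gamma> t0 v \<bullet> tangent \<gamma> t0 v) has_vector_derivative
        (tangent \<gamma> t0 u \<bullet> TD + TD \<bullet> tangent \<gamma> t0 u)) (at u)"
      by (rule bounded_bilinear.has_vector_derivative[OF bounded_bilinear_inner hTD hTD])
    then have "((\<lambda>v. 1::real) has_vector_derivative (tangent \<gamma> t0 u \<bullet> TD + TD \<bullet> tangent \<gamma> t0 u)) (at u)"
      by (simp add: TT)
    then have "tangent \<gamma> t0 u \<bullet> TD + TD \<bullet> tangent \<gamma> t0 u = 0"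
      using vector_derivative_unique_within[OF _ _ has_vector_derivative_const, of u UNIV] by auto
    then have TD0: "tangent \<gamma> t0 u \<bullet> TD = 0" by (simp add: inner_commute)
    have dsT: "d_s \<gamma> (\<lambda>(t', u'). tangent \<gamma> t' u') t0 u = (1 / speed \<gamma> t0 u) *\<^sub>R TD"
      by (simp add: d_s_def d_u_def TD_def)
    have TN: "tangent \<gamma> t0 u \<bullet> normal \<gamma> t0 u = 0"
      by (simp add: normal_def dsT TD0)
    have g2T: "g2 (t0, u) = speed \<gamma> t0 u *\<^sub>R tangent \<gamma> t0 u"
      using nz[of u] by (simp add: tan sp)
    have fc: "cross3 (theta_normal \<gamma> \<theta> t0 u) (tangent \<gamma> t0 u) = - theta_binormal \<gamma> \<theta> t0 u"
      unfolding theta_normal_def theta_binormal_def binormal_def by (rule frame_cross[OF TT TN])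
    show ?thesis
      by (simp add: g1eq[OF t0] g2T cross_mult_left cross_mult_right fc)
  qed
  have "((\<lambda>t. (1/2) *\<^sub>R I t) has_vector_derivative (1/2) *\<^sub>R (K + J)) (at t0 within U)"
    using leib by (rule bounded_linear.has_vector_derivative[OF bounded_linear_scaleR_right])
  then have "((\<lambda>t. (1/2) *\<^sub>R I t) has_vector_derivative K) (at t0 within U)"
    using ibp by (simp add: scaleR_add_right flip: scaleR_2)
  then have "(area_vector \<gamma> has_vector_derivative K) (at t0 within U)"
    by (rule has_vector_derivative_transform_within[OF _ zero_less_one t0]) (simp add: area)
  moreover have "K = - curve_integral_ds \<gamma> t0 (\<lambda>u. curvature \<gamma> t0 u *\<^sub>R theta_binormal \<gamma> \<theta> t0 u)"
    unfolding K_def curve_integral_ds_def pw by (simp add: integral_neg)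
  ultimately show "(area_vector \<gamma> has_vector_derivative
           - curve_integral_ds \<gamma> t0 (\<lambda>u. curvature \<gamma> t0 u *\<^sub>R theta_binormal \<gamma> \<theta> t0 u))
         (at t0 within {0..<T})" unfolding U_def by simp
qed

end
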